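(* Let $n\geq 3$. For every triangulation $T\in\mathcal{T}_n$ there exists $T'\in\mathcal{T}^{(3)}_n$ such that $T\rhd T'$.
   Context: Label the vertices of a convex $n$-gon by $1,\dots,n$ in cyclic order; $\mathrm{Diag}_n = \{\{i,j\} \subseteq [n]: i-j\not\equiv \pm1 \pmod n\}$; two diagonals cross if they meet in the interior of the polygon (their four endpoints are distinct and interleave cyclically). A triangulation is identified with its set of diagonals, and $\mathcal{T}_n$ is the set of triangulations. Swapping relation: for $\{i,j\},\{i',j'\}\in\mathrm{Diag}_n$ written with $i<j$ and $i'<j'$, write $\{i,j\}\rhd\{i',j'\}$ if either $\{i,j\}$ and $\{i',j'\}$ do not cross (in particular $d\rhd d$ for every $d$), or $i'<i<j'<j<n$ and $j'-i>1$. For $T,T'\in\mathcal{T}_n$, write $T\rhd T'$ if $d\rhd d'$ for all $d\in T$ and $d'\in T'$. A parenthesization of an ordered list of symbols $\sigma_1,\dots,\sigma_m$ is a way to insert parentheses into $\sigma_1\sigma_2\cdots\sigma_m$ so that it is read as $m-1$ applications of a binary product. $k$-parenthesizations are defined recursively: a $0$-parenthesization is a single symbol. For odd $k\geq 1$, a $k$-parenthesization is one of the form $\pi_1(\pi_2(\cdots(\pi_{\ell-1}(\pi_\ell\sigma))\cdots))$ with $\ell \geq 0$, $\sigma$ a single symbol and $\pi_1,\dots,\pi_\ell$ $(k-1)$-parenthesizations (of consecutive blocks of symbols). For even $k \geq 2$, a $k$-parenthesization is one of the form $(\cdots((\sigma\pi_1)\pi_2)\cdots\pi_{\ell-1})\pi_\ell$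 with $\ell\ge 0$, $\sigma$ a single symbol and $\pi_i$ $(k-1)$-parenthesizations. Triangulations $T\in\mathcal{T}_n$ are in bijection with parenthesizations of $\sigma_1,\dots,\sigma_{n-1}$: $T$ corresponds to the unique parenthesization in which, for every triangle $\{i,j,k\}$ of $T$ with $i<j<k$ (triangles may use sides of the polygon), the product $\sigma_i\cdots\sigma_{k-1}$ is formed by multiplying $\sigma_i\cdots\sigma_{j-1}$ and $\sigma_j\cdots\sigma_{k-1}$. $\mathcal{T}^{(k)}_n$ is the set of triangulations corresponding to $k$-parenthesizations under this bijection. *)

theory Defs
  imports Main
begin

text \<open>Vertices of the convex n-gon are 1..n in cyclic order. A diagonal is a
  two-element set {i,j} of vertices that are not cyclically adjacent.\<close>

definition Diag :: "nat \<Rightarrow> nat set set" where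
  "Diag n = {{i, j} | i j. 1 \<le> i \<and> i < j \<and> j \<le> n \<and> j - i \<noteq> 1 \<and> j - i \<noteq> n - 1}"

definition crosses :: "nat set \<Rightarrow> nat set \<Rightarrow> bool" where
  "crosses d e \<longleftrightarrow> (\<exists>i j i' j'. d = {i, j} \<and> e = {i', j'} \<and> i < j \<and> i' < j' \<and>
      ((i < i' \<and> i' < j \<and> j < j') \<or> (i' < i \<and> i < j' \<and> j' < j)))"

definition triangulations :: "nat \<Rightarrow> nat set set set" where
  "triangulations n = {T. T \<subseteq> Diag n \<and> (\<forall>d\<in>T. \<forall>e\<in>T. \<not> crosses d e) \<and>
      (\<forall>d\<in>Diag n - T. \<exists>e\<in>T. crosses d e)}"

definition dswap :: "nat \<Rightarrow> nat set \<Rightarrow> nat set \<Rightarrow> bool" where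
  "dswap n d e \<longleftrightarrow> \<not> crosses d e \<or>
     (\<exists>i j i' j'. d = {i, j} \<and> e = {i', j'} \<and> i < j \<and> i' < j' \<and>
        i' < i \<and> i < j' \<and> j' < j \<and> j < n \<and> j' - i > 1)"

definition tswap :: "nat \<Rightarrow> nat set set \<Rightarrow> nat set set \<Rightarrow> bool" where
  "tswap n T T' \<longleftrightarrow> (\<forall>d\<in>T. \<forall>d'\<in>T'. dswap n d d')"

text \<open>Parenthesizations as binary trees: Leaf is a single symbol, Node l r is
  the product of l and r.\<close>
datatype ptree = Leaf | Node ptree ptree

fun leaves :: "ptree \<Rightarrow> nat" where
  "leaves Leaf = 1"
| "leaves (Node l r) = leaves l + leaves r"

text \<open>For odd k: Leaf or Node pi t with pi a (k-1)-
  parenthesization and t a k-parenthesization (right comb pi_1(pi_2(...(pi_l sigma))));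
  for even k >= 2: Leaf or Node t pi (left comb).\<close>
fun kpar :: "nat \<Rightarrow> ptree \<Rightarrow> bool" where
  "kpar 0 t = (t = Leaf)"
| "kpar (Suc k) Leaf = True"
| "kpar (Suc k) (Node l r) =
     (if odd (Suc k) then kpar k l \<and> kpar (Suc k) r else kpar (Suc k) l \<and> kpar k r)"

text \<open>Diagonal-like pairs {a, a+m} for every product node spanning the symbols
  sigma_a .. sigma_(a+m-1), the tree starting at symbol position a.\<close>
fun tdiags :: "nat \<Rightarrow> ptree \<Rightarrow> nat set set" where
  "tdiags a Leaf = {}"
| "tdiags a (Node l r) =
     insert {a, a + leaves l + leaves r} (tdiags a l \<union> tdiags (a + leaves l) r)"

text \<open>The triangulation of the polygon corresponding to a parenthesization of
  sigma_1..sigma_(n-1) (the root node spans the polygon side {1,n}, which is removed).\<close>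
definition tri_of :: "ptree \<Rightarrow> nat set set" where
  "tri_of t = tdiags 1 t - {{1, 1 + leaves t}}"

definition ktriangulations :: "nat \<Rightarrow> nat \<Rightarrow> nat set set set" where
  "ktriangulations k n = {tri_of t | t. leaves t = n - 1 \<and> kpar k t}"

end

theory Submission
  imports Defs
begin

lemma kpar1_Node: "kpar 1 (Node l r) = (l = Leaf \<and> kpar 1 r)"
  by simp

lemma kpar2_Node: "kpar 2 (Node l r) = (kpar 2 l \<and> kpar 1 r)"
  by (simp add: numeral_2_eq_2)

lemma kpar3_Node: "kpar 3 (Node l r) = (kpar 2 l \<and> kpar 3 r)"
proof -
  have "odd (Suc 2)" by simp
  then have "kpar (Suc 2) (Node l r) = (kpar 2 l \<and> kpar (Suc 2) r)" by (simp only: kpar.simps not_False_eq_True if_True)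
  then show ?thesis by (simp add: numeral_3_eq_3 numeral_2_eq_2)
qed

lemma kpar_Leaf: "kpar 1 Leaf" "kpar 2 Leaf" "kpar 3 Leaf"
  by (simp_all add: numeral_3_eq_3 numeral_2_eq_2)

fun rcomb :: "nat \<Rightarrow> ptree" where
  "rcomb 0 = Leaf"
| "rcomb (Suc 0) = Leaf"
| "rcomb (Suc (Suc m)) = Node Leaf (rcomb (Suc m))"

lemma rcomb_props:
  "m \<ge> 1 \<Longrightarrow> kpar 1 (rcomb m) \<and> leaves (rcomb m) = m \<and>
     tdiags c (rcomb m) \<subseteq> {{x, c + m} | x. c \<le> x \<and> x + 2 \<le> c + m}"
proof (induction m arbitrary: c rule: rcomb.induct)
  case 1 then show ?case by simp
next
  case 2 then show ?case by simp
next
  case (3 m)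
  have IH: "kpar 1 (rcomb (Suc m)) \<and> leaves (rcomb (Suc m)) = Suc m \<and>
     tdiags (c+1) (rcomb (Suc m)) \<subseteq> {{x, c + 1 + Suc m} | x. c + 1 \<le> x \<and> x + 2 \<le> c + 1 + Suc m}"
    using "3.IH"[of "Suc c"] by simp
  have S: "{{x, c + 1 + Suc m} | x. c + 1 \<le> x \<and> x + 2 \<le> c + 1 + Suc m} \<subseteq>
     {{x, c + Suc (Suc m)} | x. c \<le> x \<and> x + 2 \<le> c + Suc (Suc m)}"
  proof
    fix e assume "e \<in> {{x, c + 1 + Suc m} | x. c + 1 \<le> x \<and> x + 2 \<le> c + 1 + Suc m}"
    then obtain x where "e = {x, c + 1 + Suc m}" "c + 1 \<le> x" "x + 2 \<le> c + 1 + Suc m" by blast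
    then show "e \<in> {{x, c + Suc (Suc m)} | x. c \<le> x \<and> x + 2 \<le> c + Suc (Suc m)}"
      by (intro CollectI exI[of _ x]) simp
  qed
  have T: "tdiags c (rcomb (Suc (Suc m))) = insert {c, c + Suc (Suc m)} (tdiags (c+1) (rcomb (Suc m)))"
    using IH by simp
  have h1: "{c, c + Suc (Suc m)} \<in> {{x, c + Suc (Suc m)} | x. c \<le> x \<and> x + 2 \<le> c + Suc (Suc m)}"
    by (intro CollectI exI[of _ c]) simp
  have h2: "tdiags (c+1) (rcomb (Suc m)) \<subseteq> {{x, c + Suc (Suc m)} | x. c \<le> x \<and> x + 2 \<le> c + Suc (Suc m)}"
    using IH[THEN conjunct2, THEN conjunct2] S by (rule order_trans)
  have h3: "tdiags c (rcomb (Suc (Suc m))) \<subseteq> {{x, c + Suc (Suc m)} | x. c \<le> x \<and> x + 2 \<le> c + Suc (Suc m)}"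
    unfolding T using h1 h2 by (simp only: insert_subset)
  have h4: "kpar 1 (rcomb (Suc (Suc m)))" using IH by (simp add: kpar1_Node)
  have h5: "leaves (rcomb (Suc (Suc m))) = Suc (Suc m)" using IH by simp
  show ?case using h3 h4 h5 by blast
qed

definition E2 :: "(nat \<Rightarrow> bool) \<Rightarrow> nat \<Rightarrow> nat \<Rightarrow> nat set set" where
  "E2 N a b = {{a,y} | y. a<y \<and> y\<le>b \<and> (N y \<or> y=b \<or> y=a+1)} \<union>
     {{x,y} | x y. a<x \<and> x+2\<le>y \<and> y\<le>b \<and> (N y \<or> y=b) \<and> (\<forall>v. x<v \<and> v<y \<longrightarrow> \<not> N v)}"

lemma two_par:
  assumes "a < b"
  shows "\<exists>t. kpar 2 t \<and> leaves t = b - a \<and> tdiags a t \<subseteq> E2 N a b"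
  using assms
proof (induction b rule: less_induct)
  case (less b)
  show ?case
  proof (cases "b = a + 1")
    case True
    then show ?thesis by (intro exI[of _ Leaf]) (simp add: kpar_Leaf)
  next
    case False
    define S where "S = {v. a<v \<and> v<b \<and> (N v \<or> v = a+1)}"
    have fin: "finite S" unfolding S_def by (rule finite_subset[of _ "{..<b}"]) auto
    have ne: "a+1 \<in> S" unfolding S_def using less.prems False by auto
    define m where "m = Max S"
    have mS: "m \<in> S" unfolding m_def using fin ne Max_in by blast
    have mmax: "\<And>v. v \<in> S \<Longrightarrow> v \<le> m" unfolding m_def using fin Max_ge by blast
    have am: "a < m" "m < b" "N m \<or> m = a+1" using mS unfolding S_def by auto
    obtain tl where tl: "kpar 2 tl" "leaves tl = m - a" "tdiags a tl \<subseteq> E2 N a m"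
      using less.IH[OF am(2) am(1)] by blast
    have r: "kpar 1 (rcomb (b-m)) \<and> leaves (rcomb (b-m)) = b-m \<and>
     tdiags m (rcomb (b-m)) \<subseteq> {{x, m + (b-m)} | x. m \<le> x \<and> x + 2 \<le> m + (b-m)}"
      using rcomb_props[of "b-m" m] am by simp
    have sub1: "E2 N a m \<subseteq> E2 N a b"
    proof
      fix e assume "e \<in> E2 N a m"
      then consider (A) y where "e = {a,y}" "a<y" "y\<le>m" "N y \<or> y=m \<or> y=a+1"
        | (B) x y where "e = {x,y}" "a<x" "x+2\<le>y" "y\<le>m" "N y \<or> y=m"
            "\<forall>v. x<v \<and> v<y \<longrightarrow> \<not> N v"
        unfolding E2_def by blast
      then show "e \<in> E2 N a b"
      proof cases
        case A
        then have "N y \<or> y=b \<or> y=a+1" using am by auto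
        then have "e \<in> {{a,y} | y. a<y \<and> y\<le>b \<and> (N y \<or> y=b \<or> y=a+1)}"
          using A am by (intro CollectI exI[of _ y]) auto
        then show ?thesis unfolding E2_def by blast
      next
        case B
        then have "N y \<or> y=b" using am by auto
        then have "e \<in> {{x,y} | x y. a<x \<and> x+2\<le>y \<and> y\<le>b \<and> (N y \<or> y=b) \<and> (\<forall>v. x<v \<and> v<y \<longrightarrow> \<not> N v)}"
          using B am by (intro CollectI exI[of _ x] exI[of _ y]) auto
        then show ?thesis unfolding E2_def by blast
      qed
    qed
    have sub2: "{{x, m + (b-m)} | x. m \<le> x \<and> x + 2 \<le> m + (b-m)} \<subseteq> E2 N a b"
    proof
      fix e assume "e \<in> {{x, m + (b-m)} | x. m \<le> x \<and> x + 2 \<le> m + (b-m)}"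
      then obtain x where e: "e = {x,b}" "m \<le> x" "x+2 \<le> b" using am by auto
      have "\<forall>v. x<v \<and> v<b \<longrightarrow> \<not> N v"
      proof (intro allI impI)
        fix v assume "x<v \<and> v<b"
        then show "\<not> N v" using mmax[of v] e am unfolding S_def by fastforce
      qed
      then have "e \<in> {{x,y} | x y. a<x \<and> x+2\<le>y \<and> y\<le>b \<and> (N y \<or> y=b) \<and> (\<forall>v. x<v \<and> v<y \<longrightarrow> \<not> N v)}"
        using e am by (intro CollectI exI[of _ x] exI[of _ b]) auto
      then show "e \<in> E2 N a b" unfolding E2_def by blast
    qed
    have "{a,b} \<in> {{a,y} | y. a<y \<and> y\<le>b \<and> (N y \<or> y=b \<or> y=a+1)}"
      using less.prems by (intro CollectI exI[of _ b]) auto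
    then have "{a,b} \<in> E2 N a b" unfolding E2_def by blast
    moreover have "tdiags a (Node tl (rcomb (b-m))) =
        insert {a, b} (tdiags a tl \<union> tdiags m (rcomb (b-m)))"
      using tl r am by simp
    moreover have "tdiags a tl \<union> tdiags m (rcomb (b-m)) \<subseteq> E2 N a b"
    proof (rule Un_least)
      show "tdiags a tl \<subseteq> E2 N a b" using tl(3) sub1 by (rule order_trans)
      have "tdiags m (rcomb (b-m)) \<subseteq> {{x, m + (b-m)} | x. m \<le> x \<and> x + 2 \<le> m + (b-m)}"
        using r by (rule conjunct2[THEN conjunct2])
      then show "tdiags m (rcomb (b-m)) \<subseteq> E2 N a b" using sub2 by (rule order_trans)
    qed
    ultimately have f3: "tdiags a (Node tl (rcomb (b-m))) \<subseteq> E2 N a b"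
      by (simp only: insert_subset) 
    have f1: "kpar 2 (Node tl (rcomb (b-m)))" using tl r by (simp add: kpar2_Node)
    have f2: "leaves (Node tl (rcomb (b-m))) = b - a" using tl r am by simp
    show ?thesis by (rule exI[of _ "Node tl (rcomb (b-m))"]) (rule conjI[OF f1 conjI[OF f2 f3]])
  qed
qed

definition E3 :: "(nat \<Rightarrow> bool) \<Rightarrow> (nat \<Rightarrow> bool) \<Rightarrow> nat \<Rightarrow> nat \<Rightarrow> nat set set" where
  "E3 K N n c = {{v,n} | v. c\<le>v \<and> v<n \<and> (K v \<or> v=c)} \<union>
    {e. \<exists>a b. c\<le>a \<and> a<b \<and> b<n \<and> K b \<and> (K a \<or> a = c) \<and> (\<forall>v. a<v \<and> v<b \<longrightarrow> \<not> K v)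
        \<and> e \<in> E2 N a b}"

lemma three_par:
  assumes "c < n" "K (n - 1)"
  shows "\<exists>t. kpar 3 t \<and> leaves t = n - c \<and> tdiags c t \<subseteq> E3 K N n c"
  using assms(1)
proof (induction "n - c" arbitrary: c rule: less_induct)
  case less
  show ?case
  proof (cases "c = n - 1")
    case True
    then show ?thesis using less.prems by (intro exI[of _ Leaf]) (simp add: kpar_Leaf)
  next
    case False
    define S where "S = {v. c<v \<and> v<n \<and> K v}"
    have fin: "finite S" unfolding S_def by (rule finite_subset[of _ "{..<n}"]) auto
    have ne: "n-1 \<in> S" unfolding S_def using less.prems False assms(2) by auto
    define k where "k = Min S"
    have kS: "k \<in> S" unfolding k_def using fin ne Min_in by blast
    have kmin: "\<And>v. v \<in> S \<Longrightarrow> k \<le> v" unfolding k_def using fin Min_le by blast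
    have ck: "c < k" "k < n" "K k" using kS unfolding S_def by auto
    have nk: "n - k < n - c" using ck by simp
    obtain tr where tr: "kpar 3 tr" "leaves tr = n - k" "tdiags k tr \<subseteq> E3 K N n k"
      using less.hyps[OF nk ck(2)] by blast
    obtain tl where tl: "kpar 2 tl" "leaves tl = k - c" "tdiags c tl \<subseteq> E2 N c k"
      using two_par[OF ck(1)] by blast
    have sub1: "E3 K N n k \<subseteq> E3 K N n c"
    proof
      fix e assume "e \<in> E3 K N n k"
      then consider (A) v where "e = {v,n}" "k\<le>v" "v<n" "K v \<or> v=k"
        | (B) a b where "k\<le>a" "a<b" "b<n" "K b" "K a \<or> a = k" "\<forall>v. a<v \<and> v<b \<longrightarrow> \<not> K v"
            "e \<in> E2 N a b"
        unfolding E3_def by blast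
      then show "e \<in> E3 K N n c"
      proof cases
        case A
        then have "e \<in> {{v,n} | v. c\<le>v \<and> v<n \<and> (K v \<or> v=c)}"
          using ck by (intro CollectI exI[of _ v]) auto
        then show ?thesis unfolding E3_def by blast
      next
        case B
        then have "K a" using ck by auto
        then have "c\<le>a \<and> a<b \<and> b<n \<and> K b \<and> (K a \<or> a = c) \<and> (\<forall>v. a<v \<and> v<b \<longrightarrow> \<not> K v)
        \<and> e \<in> E2 N a b" using B ck by simp
        then show ?thesis unfolding E3_def by blast
      qed
    qed
    have sub2: "E2 N c k \<subseteq> E3 K N n c"
    proof -
      have "\<forall>v. c<v \<and> v<k \<longrightarrow> \<not> K v"
        using kmin ck unfolding S_def by force
      then show ?thesis unfolding E3_def using ck by blast
    qed
    have "{c,n} \<in> E3 K N n c" unfolding E3_def using less.prems by blast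
    moreover have "tdiags c (Node tl tr) = insert {c, n} (tdiags c tl \<union> tdiags k tr)"
      using tl tr ck by simp
    moreover have "tdiags c tl \<union> tdiags k tr \<subseteq> E3 K N n c"
    proof (rule Un_least)
      show "tdiags c tl \<subseteq> E3 K N n c" using tl(3) sub2 by (rule order_trans)
      show "tdiags k tr \<subseteq> E3 K N n c" using tr(3) sub1 by (rule order_trans)
    qed
    ultimately have f3: "tdiags c (Node tl tr) \<subseteq> E3 K N n c"
      by (simp only: insert_subset)
    have f1: "kpar 3 (Node tl tr)" using tl tr by (simp add: kpar3_Node)
    have f2: "leaves (Node tl tr) = n - c" using tl tr ck by simp
    show ?thesis by (rule exI[of _ "Node tl tr"]) (rule conjI[OF f1 conjI[OF f2 f3]])
  qed
qed


lemma diag_elem: "d \<in> Diag n \<Longrightarrow> \<exists>i j. d = {i,j} \<and> 1 \<le> i \<and> i < j \<and> j \<le> n"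
  unfolding Diag_def by blast

lemma pair_ord: "(i::nat)<j \<Longrightarrow> p<q \<Longrightarrow> {i,j}={p,q} \<Longrightarrow> p=i \<and> q=j"
  by (auto simp: doubleton_eq_iff)

lemma crosses_iff:
  assumes "i<j" "i'<j'"
  shows "crosses {i,j} {i',j'} \<longleftrightarrow> ((i<i' \<and> i'<j \<and> j<j') \<or> (i'<i \<and> i<j' \<and> j'<j))"
proof
  assume "crosses {i,j} {i',j'}"
  then obtain p q p' q' where h: "{i,j} = {p,q}" "{i',j'} = {p',q'}" "p<q" "p'<q'"
    "(p < p' \<and> p' < q \<and> q < q') \<or> (p' < p \<and> p < q' \<and> q' < q)"
    unfolding crosses_def by blast
  have "p=i \<and> q=j" using pair_ord[OF assms(1) h(3) h(1)] .
  moreover have "p'=i' \<and> q'=j'" using pair_ord[OF assms(2) h(4) h(2)] .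
  ultimately show "((i<i' \<and> i'<j \<and> j<j') \<or> (i'<i \<and> i<j' \<and> j'<j))" using h(5) by simp
next
  assume "((i<i' \<and> i'<j \<and> j<j') \<or> (i'<i \<and> i<j' \<and> j'<j))"
  then show "crosses {i,j} {i',j'}" unfolding crosses_def using assms by blast
qed

lemma dswapI: "i<j \<Longrightarrow> i'<j' \<Longrightarrow> i'<i \<Longrightarrow> i<j' \<Longrightarrow> j'<j \<Longrightarrow> j<n \<Longrightarrow> j'-i>1
   \<Longrightarrow> dswap n {i,j} {i',j'}"
  unfolding dswap_def by blast

lemma dswap_nc: "\<not> crosses d e \<Longrightarrow> dswap n d e"
  unfolding dswap_def by blast

lemma key:
  assumes TD: "T \<subseteq> Diag n" and NC: "\<forall>d\<in>T. \<forall>e\<in>T. \<not> crosses d e"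
    and Kdef: "K = (\<lambda>v. v = n-1 \<or> {v,n} \<in> T)"
    and Ndef: "N = (\<lambda>v. \<not>(\<exists>j. {v-1,j} \<in> T \<and> v<j))"
    and d: "d\<in>T" and e: "e \<in> E3 K N n 1" and ne: "e \<noteq> {1,n}"
  shows "dswap n d e"
proof -
  obtain i j where dij: "d={i,j}" "1\<le>i" "i<j" "j\<le>n" using diag_elem d TD by blast
  have NCij: "\<not>((i<p \<and> p<j \<and> j<q) \<or> (p<i \<and> i<q \<and> q<j))" if "{p,q}\<in>T" "p<q" for p q
    using NC d that crosses_iff[OF dij(3) that(2)] dij(1) by blast
  from e consider (A) v where "e = {v,n}" "1\<le>v" "v<n" "K v \<or> v=1"
    | (B) a b where "1\<le>a" "a<b" "b<n" "K b" "K a \<or> a = 1" "\<forall>v. a<v \<and> v<b \<longrightarrow> \<not> K v"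
            "e \<in> E2 N a b"
    unfolding E3_def by blast
  then show ?thesis
  proof cases
    case A
    have "v \<noteq> 1" using A ne by auto
    then have Kv: "K v" using A by auto
    have "\<not>((i<v \<and> v<j \<and> j<n) \<or> (v<i \<and> i<n \<and> n<j))"
    proof
      assume c: "(i<v \<and> v<j \<and> j<n) \<or> (v<i \<and> i<n \<and> n<j)"
      then have c1: "i<v \<and> v<j \<and> j<n" using dij by auto
      show False
      proof (cases "v = n-1")
        case True then show False using c1 by auto
      next
        case False
        then have "{v,n} \<in> T" using Kv Kdef by auto
        then show False using NCij[of v n] c1 A by auto
      qed
    qed
    then have "\<not> crosses d e" using crosses_iff[OF dij(3) A(3)] A(1) dij(1) by simp
    then show ?thesis by (rule dswap_nc)
  next
    case B
    have F1: "j = n" if "i<a" "a<j"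
    proof -
      have "a \<noteq> 1" using that dij by auto
      then have Ka: "K a" using B by auto
      show ?thesis
      proof (cases "a = n-1")
        case True then show ?thesis using that dij by auto
      next
        case False
        then have "{a,n} \<in> T" using Ka Kdef by auto
        then show ?thesis using NCij[of a n] that dij B by auto
      qed
    qed
    have F2: "j \<noteq> n" if "a<i" "i<b"
    proof
      assume "j = n"
      then have "{i,n} \<in> T" using d dij by simp
      then have "K i" using Kdef by simp
      then show False using B(6) that by blast
    qed
    have F3: "j = n" if "i+1=b" "b<j"
    proof (cases "b = n-1")
      case True then show ?thesis using that dij by auto
    next
      case False
      then have "{b,n} \<in> T" using B(4) Kdef by auto
      then show ?thesis using NCij[of b n] that dij B by auto
    qed
    have F4: "\<not> N y" if "i+1=y" "y<j" for y
    proof -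
      have "{y-1,j} \<in> T \<and> y<j" using that d dij by auto
      then show ?thesis using Ndef by auto
    qed
    have F5: False if nj: "\<not> N j" and ij: "i < j-1"
    proof -
      obtain j2 where "{j-1,j2} \<in> T" "j<j2" using nj Ndef by auto
      then show False using NCij[of "j-1" j2] ij dij by auto
    qed
    from B(7) consider (B1) y where "e = {a,y}" "a<y" "y\<le>b" "N y \<or> y=b \<or> y=a+1"
        | (B2) x y where "e = {x,y}" "a<x" "x+2\<le>y" "y\<le>b" "N y \<or> y=b"
            "\<forall>v. x<v \<and> v<y \<longrightarrow> \<not> N v"
      unfolding E2_def by blast
    then show ?thesis
    proof cases
      case B1
      note cr = crosses_iff[OF dij(3) B1(2)]
      consider "\<not>((i<a \<and> a<j \<and> j<y) \<or> (a<i \<and> i<y \<and> y<j))" | "i<a \<and> a<j \<and> j<y"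
        | "a<i \<and> i<y \<and> y<j" by blast
      then show ?thesis
      proof cases
        case 1 then show ?thesis using cr dij(1) B1(1) dswap_nc by metis
      next
        case 2 then show ?thesis using F1 B1 B by auto
      next
        case 3
        have jn: "j<n" using F2 3 B1 dij by fastforce
        have "y - i > 1"
        proof (rule ccontr)
          assume "\<not> y - i > 1"
          then have y: "y = i+1" using 3 by auto
          show False
          proof -
            consider "N y" | "y = b" | "y = a+1" using B1 by blast
            then show False
            proof cases
              case 1 then show False using F4[OF y[symmetric]] 3 by blast
            next
              case 2 then show False using F3 y 3 jn by auto
            next
              case 3 then show False using y \<open>a<i \<and> i<y \<and> y<j\<close> by auto
            qed
          qed
        qed
        then show ?thesis using dswapI[OF dij(3) B1(2) _ _ _ jn] 3 dij(1) B1(1) by blast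
      qed
    next
      case B2
      have xy: "x<y" using B2 by auto
      note cr = crosses_iff[OF dij(3) xy]
      consider "\<not>((i<x \<and> x<j \<and> j<y) \<or> (x<i \<and> i<y \<and> y<j))" | "i<x \<and> x<j \<and> j<y"
        | "x<i \<and> i<y \<and> y<j" by blast
      then show ?thesis
      proof cases
        case 1 then show ?thesis using cr dij(1) B2(1) dswap_nc by metis
      next
        case 2
        have "\<not> N j" using B2(6) 2 by blast
        then show ?thesis using F5 2 by fastforce
      next
        case 3
        have jn: "j<n" using F2 3 B2 dij by fastforce
        have "y - i > 1"
        proof (rule ccontr)
          assume "\<not> y - i > 1"
          then have y: "y = i+1" using 3 by auto
          consider "N y" | "y = b" using B2 by blast
          then show False
          proof cases
            case 1 then show False using F4[OF y[symmetric]] 3 by blast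
          next
            case 2 then show False using F3 y 3 jn by auto
          qed
        qed
        then show ?thesis using dswapI[OF dij(3) xy _ _ _ jn] 3 dij(1) B2(1) by blast
      qed
    qed
  qed
qed

theorem lemma3p8:
  fixes n :: nat and T :: "nat set set"
  assumes "n \<ge> 3" and "T \<in> triangulations n"
  shows "\<exists>T' \<in> ktriangulations 3 n. tswap n T T'"
proof -
  have TD: "T \<subseteq> Diag n" and NC: "\<forall>d\<in>T. \<forall>e\<in>T. \<not> crosses d e"
    using assms(2) unfolding triangulations_def by auto
  define K where "K = (\<lambda>v. v = n-1 \<or> {v,n} \<in> T)"
  define N where "N = (\<lambda>v. \<not>(\<exists>j. {v-1,j} \<in> T \<and> v<j))"
  have "1 < n" using assms(1) by simp
  moreover have "K (n-1)" unfolding K_def by simp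
  ultimately obtain t where t: "kpar 3 t" "leaves t = n - 1" "tdiags 1 t \<subseteq> E3 K N n 1"
    using three_par[of 1 n K N] by blast
  have "tri_of t \<in> ktriangulations 3 n" unfolding ktriangulations_def using t by blast
  moreover have "tswap n T (tri_of t)"
    unfolding tswap_def
  proof (intro ballI)
    fix d e assume d: "d \<in> T" and e: "e \<in> tri_of t"
    have "1 + leaves t = n" using t assms(1) by simp
    then have e1: "e \<in> E3 K N n 1" "e \<noteq> {1,n}" using e t(3) unfolding tri_of_def by auto
    show "dswap n d e" by (rule key[OF TD NC K_def N_def d e1])
  qed
  ultimately show ?thesis by blast
qed

end
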